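(* Let $a>0$, $\alpha\in[0,1)$ and $f\in\mathcal C_a$. For every $x\in(x_\alpha^-,a)$ we have $\mathrm{Sh}_\alpha(f)(x)<f(x)$ if and only if $x\in(u_\alpha,a)$. Moreover, the point of abscissa $u_\alpha$ is the unique intersection point of the graphs of $\mathrm{Sh}_\alpha(f)$ and $f$ with abscissa in $(x_\alpha^-,a)$.
   Context: $\mathcal C_a$ is the set of $C^1$ functions $f:\mathbb R\to\mathbb R$ that are even, satisfy $f(s)=|s|$ for $|s|\ge a$ and are strictly convex on $[-a,a]$. For $f\in\mathcal C_a$: $F_\alpha(s)=f(s)-\alpha s$, $x_\alpha^+=(f')^{-1}(\alpha)\in[0,a)$ (inverse of $f':[-a,a]\to[-1,1]$); $F_\alpha$ decreases on $(-\infty,x_\alpha^+]$ and increases on $[x_\alpha^+,\infty)$. Let $F_\alpha^{-1}$ be the inverse of $F_\alpha|_{[x_\alpha^+,\infty)}$ and $\phi=F_\alpha^{-1}\circ F_\alpha$; $\phi$ is a decreasing bijection $(-\infty,x_\alpha^+]\to[x_\alpha^+,\infty)$ and $x_\alpha^-<x_\alpha^+$ is the unique point with $\phi(x_\alpha^-)=a$. Let $\delta_x=(1-\alpha)^{-1}F_\alpha(x)-\phi(x)$, $s_\alpha=x_\alpha^++\delta_{x_\alpha^+}$; $x\mapsto x+\delta_x$ is an increasing bijection $(-\infty,x_\alpha^+]\to(-\infty,s_\alpha]$ with inverse $\tau$. Define $\mathrm{Sh}_\alpha(f)(x)=\alpha x+F_\alpha(\tau(x))$ for $x\le s_\alpha$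 and $=x$ for $x>s_\alpha$. Finally $u_\alpha$ denotes the unique element of $(x_\alpha^-,s_\alpha)$ such that $\phi(\tau(u_\alpha))=u_\alpha$. *)

theory Defs
  imports "HOL-Analysis.Analysis"
begin

definition strictly_convex_on :: "real set \<Rightarrow> (real \<Rightarrow> real) \<Rightarrow> bool" where
  "strictly_convex_on S f \<longleftrightarrow>
     (\<forall>x\<in>S. \<forall>y\<in>S. \<forall>t::real. x \<noteq> y \<and> 0 < t \<and> t < 1 \<longrightarrow>
        f ((1 - t) * x + t * y) < (1 - t) * f x + t * f y)"

definition class_C :: "real \<Rightarrow> (real \<Rightarrow> real) \<Rightarrow> bool" where
  "class_C a f \<longleftrightarrow>
     (\<forall>x. f differentiable (at x)) \<and> continuous_on UNIV (deriv f) \<and>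
     (\<forall>s. f (- s) = f s) \<and>
     (\<forall>s. \<bar>s\<bar> \<ge> a \<longrightarrow> f s = \<bar>s\<bar>) \<and>
     strictly_convex_on {-a..a} f"

definition F_al :: "(real \<Rightarrow> real) \<Rightarrow> real \<Rightarrow> real \<Rightarrow> real" where
  "F_al f \<alpha> s = f s - \<alpha> * s"

definition xplus :: "real \<Rightarrow> (real \<Rightarrow> real) \<Rightarrow> real \<Rightarrow> real" where
  "xplus a f \<alpha> = (THE x. x \<in> {-a..a} \<and> deriv f x = \<alpha>)"

definition Finv :: "real \<Rightarrow> (real \<Rightarrow> real) \<Rightarrow> real \<Rightarrow> real \<Rightarrow> real" where
  "Finv a f \<alpha> y = (THE t. t \<ge> xplus a f \<alpha> \<and> F_al f \<alpha> t = y)"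

definition phi :: "real \<Rightarrow> (real \<Rightarrow> real) \<Rightarrow> real \<Rightarrow> real \<Rightarrow> real" where
  "phi a f \<alpha> x = Finv a f \<alpha> (F_al f \<alpha> x)"

definition xminus :: "real \<Rightarrow> (real \<Rightarrow> real) \<Rightarrow> real \<Rightarrow> real" where
  "xminus a f \<alpha> = (THE x. x \<le> xplus a f \<alpha> \<and> phi a f \<alpha> x = a)"

definition delta :: "real \<Rightarrow> (real \<Rightarrow> real) \<Rightarrow> real \<Rightarrow> real \<Rightarrow> real" where
  "delta a f \<alpha> x = F_al f \<alpha> x / (1 - \<alpha>) - phi a f \<alpha> x"

definition s_al :: "real \<Rightarrow> (real \<Rightarrow> real) \<Rightarrow> real \<Rightarrow> real" where
  "s_al a f \<alpha> = xplus a f \<alpha> + delta a f \<alpha> (xplus a f \<alpha>)"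

definition tau :: "real \<Rightarrow> (real \<Rightarrow> real) \<Rightarrow> real \<Rightarrow> real \<Rightarrow> real" where
  "tau a f \<alpha> y = (THE x. x \<le> xplus a f \<alpha> \<and> x + delta a f \<alpha> x = y)"

definition Sh :: "real \<Rightarrow> (real \<Rightarrow> real) \<Rightarrow> real \<Rightarrow> real \<Rightarrow> real" where
  "Sh a f \<alpha> x = (if x \<le> s_al a f \<alpha> then \<alpha> * x + F_al f \<alpha> (tau a f \<alpha> x) else x)"

definition u_al :: "real \<Rightarrow> (real \<Rightarrow> real) \<Rightarrow> real \<Rightarrow> real" where
  "u_al a f \<alpha> = (THE u. xminus a f \<alpha> < u \<and> u < s_al a f \<alpha> \<and> phi a f \<alpha> (tau a f \<alpha> u) = u)"

end

theory Submission
  imports Defs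
begin

context
  fixes a \<alpha> :: real and f :: "real \<Rightarrow> real"
  assumes apos: "a > 0" and al0: "0 \<le> \<alpha>" and al1: "\<alpha> < 1" and C: "class_C a f"
begin

lemma fD: "(f has_real_derivative deriv f x) (at x)"
  using C unfolding class_C_def by (simp add: DERIV_deriv_iff_real_differentiable)

lemma contD: "isCont (deriv f) x"
  using C unfolding class_C_def by (simp add: continuous_on_eq_continuous_at)

lemma fcont: "continuous_on S f"
  by (meson DERIV_isCont continuous_at_imp_continuous_on fD)

lemma fabs: "\<bar>s\<bar> \<ge> a \<Longrightarrow> f s = \<bar>s\<bar>"
  using C unfolding class_C_def by blast

lemma f_scvx: "strictly_convex_on {-a..a} f"
  using C unfolding class_C_def by blast

lemma D_gt: assumes "s > a" shows "deriv f s = 1"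
proof -
  have "((\<lambda>x. x) has_real_derivative 1) (at s)" by (rule DERIV_ident)
  then have "(f has_real_derivative 1) (at s)"
    by (rule has_field_derivative_transform_within_open[of _ _ _ "{a<..}"])
       (use assms apos fabs in auto)
  then show ?thesis by (rule DERIV_imp_deriv)
qed

lemma D_lt: assumes "s < -a" shows "deriv f s = -1"
proof -
  have "((\<lambda>x. -x) has_real_derivative -1) (at s)" by (rule derivative_eq_intros | simp)+
  then have "(f has_real_derivative -1) (at s)"
    by (rule has_field_derivative_transform_within_open[of _ _ _ "{..<-a}"])
       (use assms apos fabs in auto)
  then show ?thesis by (rule DERIV_imp_deriv)
qed

lemma D_a: "deriv f a = 1"
proof -
  have "(deriv f \<longlongrightarrow> deriv f a) (at_right a)"
    using contD[of a] by (simp add: isCont_def filterlim_at_split)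
  moreover have "(deriv f \<longlongrightarrow> 1) (at_right a)"
  proof (rule Lim_transform_eventually[OF tendsto_const])
    show "\<forall>\<^sub>F x in at_right a. 1 = deriv f x"
      by (simp add: eventually_at_right_less eventually_mono[OF eventually_at_right_less] D_gt)
  qed
  ultimately show ?thesis using tendsto_unique trivial_limit_at_right_real by blast
qed

lemma D_ma: "deriv f (-a) = -1"
proof -
  have "(deriv f \<longlongrightarrow> deriv f (-a)) (at_left (-a))"
    using contD[of "-a"] by (simp add: isCont_def filterlim_at_split)
  moreover have "(deriv f \<longlongrightarrow> -1) (at_left (-a))"
  proof (rule Lim_transform_eventually[OF tendsto_const])
    show "\<forall>\<^sub>F x in at_left (-a). -1 = deriv f x"
      by (rule eventually_mono[OF eventually_at_left_real[of "-a-1" "-a"]]) (auto simp: D_lt)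
  qed
  ultimately show ?thesis using tendsto_unique trivial_limit_at_left_real by blast
qed

lemma fcvx: "convex_on {-a..a} f"
proof (rule convex_onI)
  fix t x y :: real assume t: "0 < t" "t < 1" and xy: "x \<in> {-a..a}" "y \<in> {-a..a}"
  show "f ((1 - t) *\<^sub>R x + t *\<^sub>R y) \<le> (1 - t) * f x + t * f y"
  proof (cases "x = y")
    case True then show ?thesis by (simp add: algebra_simps)
  next
    case False then show ?thesis using f_scvx t xy unfolding strictly_convex_on_def
      by (auto intro: less_imp_le)
  qed
qed simp

lemma tangent: assumes "-a < c" "c < a" "-a \<le> x" "x \<le> a"
  shows "f x - f c \<ge> deriv f c * (x - c)"
proof (rule convex_on_imp_above_tangent[OF fcvx])
  show "(f has_real_derivative deriv f c) (at c within {-a..a})"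
    using fD has_field_derivative_at_within by blast
qed (use assms in auto)

lemma D_mono_open: assumes "-a < x" "x < y" "y < a" shows "deriv f x < deriv f y"
proof -
  define m where "m = (x+y)/2"
  have t1: "f m - f x \<ge> deriv f x * (m - x)" using tangent[of x m] assms unfolding m_def by auto
  have t2: "f m - f y \<ge> deriv f y * (m - y)" using tangent[of y m] assms unfolding m_def by auto
  have sc: "f ((1 - 1/2) * x + 1/2 * y) < (1 - 1/2) * f x + 1/2 * f y"
  proof -
    have "x \<in> {-a..a}" "y \<in> {-a..a}" "x \<noteq> y" "0 < (1/2::real)" "1/2 < (1::real)" using assms by auto
    then show ?thesis using f_scvx unfolding strictly_convex_on_def by blast
  qed
  then have "2 * f m < f x + f y" unfolding m_def by (simp add: field_simps)
  moreover have "m - x = (y-x)/2" "m - y = -((y-x)/2)" unfolding m_def by (auto simp: field_simps)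
  ultimately have "deriv f x * ((y-x)/2) < deriv f y * ((y-x)/2)" using t1 t2 by (simp only:)
  then show ?thesis using assms by auto
qed

lemma D_le1: assumes "-a < s" "s < a" shows "deriv f s \<le> 1"
proof -
  have "(deriv f \<longlongrightarrow> deriv f a) (at_left a)"
    using contD[of a] by (simp add: isCont_def filterlim_at_split)
  moreover have "\<forall>\<^sub>F t in at_left a. deriv f s \<le> deriv f t"
    using eventually_at_left_real[OF assms(2)]
    by (rule eventually_mono) (use D_mono_open assms in \<open>auto intro: less_imp_le\<close>)
  ultimately show ?thesis using tendsto_lowerbound D_a trivial_limit_at_left_real by metis
qed

lemma D_gem1: assumes "-a < s" "s < a" shows "deriv f s \<ge> -1"
proof -
  have "(deriv f \<longlongrightarrow> deriv f (-a)) (at_right (-a))"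
    using contD[of "-a"] by (simp add: isCont_def filterlim_at_split)
  moreover have "\<forall>\<^sub>F t in at_right (-a). deriv f t \<le> deriv f s"
    using eventually_at_right_real[OF assms(1)]
    by (rule eventually_mono) (use D_mono_open assms in \<open>auto intro: less_imp_le\<close>)
  ultimately show ?thesis using tendsto_upperbound D_ma trivial_limit_at_right_real by metis
qed

lemma D_strict: assumes "-a \<le> x" "x < y" "y \<le> a" shows "deriv f x < deriv f y"
proof -
  define m1 where "m1 = (2*x+y)/3"
  define m2 where "m2 = (x+2*y)/3"
  have m: "-a < m1" "m1 < m2" "m2 < a" "x < m1" "m2 < y" using assms unfolding m1_def m2_def by auto
  have "deriv f x \<le> deriv f m1"
    using D_mono_open[of x m1] D_gem1[of m1] D_ma m assms by (cases "x = -a") auto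
  moreover have "deriv f m2 \<le> deriv f y"
    using D_mono_open[of m2 y] D_le1[of m2] D_a m assms by (cases "y = a") auto
  ultimately show ?thesis using D_mono_open[of m1 m2] m by auto
qed


abbreviation "FF \<equiv> F_al f \<alpha>"
abbreviation "pp \<equiv> xplus a f \<alpha>"
abbreviation "xm \<equiv> xminus a f \<alpha>"
abbreviation "ph \<equiv> phi a f \<alpha>"
abbreviation "EE \<equiv> (\<lambda>x. x + delta a f \<alpha> x)"

lemma xplus_props: "-a < pp \<and> pp < a \<and> deriv f pp = \<alpha>"
proof -
  have "continuous_on {-a..a} (deriv f)" using contD continuous_at_imp_continuous_on by blast
  then obtain x where x: "-a \<le> x" "x \<le> a" "deriv f x = \<alpha>"
    using IVT'[of "deriv f" "-a" \<alpha> a] D_a D_ma al0 al1 apos by auto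
  have xi: "-a < x" "x < a" using x D_a D_ma al0 al1 by (auto simp: le_less)
  have "pp = x" unfolding xplus_def
  proof (rule the_equality)
    show "x \<in> {-a..a} \<and> deriv f x = \<alpha>" using x by auto
    fix z assume z: "z \<in> {-a..a} \<and> deriv f z = \<alpha>"
    show "z = x"
    proof (cases z x rule: linorder_cases)
      case less then show ?thesis using D_strict[of z x] z x by auto
    next
      case greater then show ?thesis using D_strict[of x z] z x by auto
    qed
  qed
  then show ?thesis using x xi by auto
qed

lemma D_below: "s < pp \<Longrightarrow> deriv f s < \<alpha>"
  using D_lt[of s] D_strict[of s pp] xplus_props al0 by (cases "s < -a") auto

lemma D_above: "s > pp \<Longrightarrow> deriv f s > \<alpha>"
  using D_gt[of s] D_strict[of pp s] xplus_props al1 by (cases "s > a") auto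

lemma D_lt1: "s < a \<Longrightarrow> deriv f s < 1"
  using D_lt[of s] D_strict[of s a] D_a by (cases "s < -a") auto

lemma FF_eq: "FF = (\<lambda>s. f s - \<alpha> * s)"
  by (rule ext) (simp add: F_al_def)

lemma FF_deriv: "(FF has_real_derivative deriv f x - \<alpha>) (at x)"
proof -
  have "((\<lambda>s. f s - \<alpha> * s) has_real_derivative deriv f x - \<alpha> * 1) (at x)"
    by (intro DERIV_diff fD DERIV_cmult DERIV_ident)
  then show ?thesis by (simp add: FF_eq)
qed

lemma FF_cont: "continuous_on S FF"
  by (meson DERIV_isCont continuous_at_imp_continuous_on FF_deriv)

lemma F_dec: assumes "x < y" "y \<le> pp" shows "FF y < FF x"
  by (rule DERIV_neg_imp_decreasing_open[OF assms(1) _ FF_cont])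
     (use FF_deriv D_below assms in force)

lemma F_inc: assumes "pp \<le> x" "x < y" shows "FF x < FF y"
  by (rule DERIV_pos_imp_increasing_open[OF assms(2) _ FF_cont])
     (use FF_deriv D_above assms in force)

lemma F_inj_r: "pp \<le> s \<Longrightarrow> pp \<le> t \<Longrightarrow> FF s = FF t \<Longrightarrow> s = t"
  by (metis F_inc less_irrefl linorder_cases)

lemma F_inj_l: "s \<le> pp \<Longrightarrow> t \<le> pp \<Longrightarrow> FF s = FF t \<Longrightarrow> s = t"
  by (metis F_dec less_irrefl linorder_cases)

lemma F_less_r_iff: "pp \<le> s \<Longrightarrow> pp \<le> t \<Longrightarrow> FF s < FF t \<longleftrightarrow> s < t"
  by (metis F_inc less_asym linorder_cases)

lemma F_ge: "x \<ge> a \<Longrightarrow> FF x = (1-\<alpha>)*x"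
  using fabs[of x] apos by (simp add: F_al_def algebra_simps)

lemma F_ma: "FF (-a) = (1+\<alpha>)*a"
  using fabs[of "-a"] apos by (simp add: F_al_def algebra_simps)

lemma G_dec: assumes "x < y" "y \<le> a" shows "f y - y < f x - x"
proof -
  have d: "((\<lambda>s. f s - s) has_real_derivative deriv f z - 1) (at z)" for z
    by (intro DERIV_diff fD DERIV_ident)
  have c: "continuous_on {x..y} (\<lambda>s. f s - s)"
    by (intro continuous_intros fcont)
  show ?thesis
    using DERIV_neg_imp_decreasing_open[OF assms(1) _ c] d D_lt1 assms by force
qed

lemma G_pos: "t < a \<Longrightarrow> f t - t > 0"
  using G_dec[of t a] fabs[of a] apos by auto

lemma G_zero: "t \<ge> a \<Longrightarrow> f t - t = 0"
  using fabs[of t] apos by auto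

lemma G_nonneg: "f t - t \<ge> 0"
  using G_pos G_zero by (metis less_le_not_le linorder_le_less_linear)

lemma G_mono: assumes "t1 \<le> t2" shows "f t2 - t2 \<le> f t1 - t1"
proof (cases "t2 \<le> a")
  case True then show ?thesis using G_dec[of t1 t2] assms by (cases "t1 = t2") auto
next
  case False then show ?thesis using G_zero[of t2] G_nonneg[of t1] by auto
qed

lemma Finv_props: assumes "y \<ge> FF pp" shows "Finv a f \<alpha> y \<ge> pp \<and> FF (Finv a f \<alpha> y) = y"
proof -
  define b where "b = max a (y/(1-\<alpha>))"
  have "FF b = (1-\<alpha>)*b" using F_ge b_def by auto
  also have "\<dots> \<ge> (1-\<alpha>)*(y/(1-\<alpha>))" using al1 unfolding b_def by (intro mult_left_mono) auto
  finally have Fb: "FF b \<ge> y" using al1 by simp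
  have pb: "pp \<le> b" using xplus_props unfolding b_def by auto
  obtain t where t: "pp \<le> t" "t \<le> b" "FF t = y" using IVT'[of FF pp y b, OF assms Fb pb FF_cont] by auto
  have "Finv a f \<alpha> y = t" unfolding Finv_def
    by (rule the_equality) (use t F_inj_r in auto)
  then show ?thesis using t by auto
qed

lemma Finv_F: "t \<ge> pp \<Longrightarrow> Finv a f \<alpha> (FF t) = t"
  using Finv_props[of "FF t"] F_inc[of pp t] F_inj_r by (cases "t = pp") auto

lemma phi_props: assumes "x \<le> pp" shows "ph x \<ge> pp \<and> FF (ph x) = FF x"
proof -
  have "FF x \<ge> FF pp" using F_dec[of x pp] assms by (cases "x = pp") auto
  then show ?thesis unfolding phi_def using Finv_props by auto
qed

lemma phi_unique: "x \<le> pp \<Longrightarrow> t \<ge> pp \<Longrightarrow> FF t = FF x \<Longrightarrow> ph x = t"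
  using phi_props F_inj_r by metis

lemma phi_p: "ph pp = pp"
  using phi_unique by auto

lemma phi_anti: assumes "x1 < x2" "x2 \<le> pp" shows "ph x2 < ph x1"
proof -
  have h1: "pp \<le> ph x1" "FF (ph x1) = FF x1" using phi_props[of x1] assms by auto
  have h2: "pp \<le> ph x2" "FF (ph x2) = FF x2" using phi_props[of x2] assms by auto
  have "FF (ph x2) < FF (ph x1)" using h1 h2 F_dec[OF assms] by simp
  then show ?thesis using F_less_r_iff[OF h2(1) h1(1)] by simp
qed

lemma phi_anti_le: assumes "x1 \<le> x2" "x2 \<le> pp" shows "ph x2 \<le> ph x1"
  using phi_anti[of x1 x2] assms by (cases "x1 = x2") auto

lemma xm_props: "xm < pp \<and> ph xm = a \<and> FF xm = FF a"
proof -
  have pa: "pp < a" "-a < pp" using xplus_props by auto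
  have "FF pp < FF a" using F_inc[of pp a] pa by auto
  moreover have "FF a \<le> FF (-a)" using F_ge[of a] F_ma al0 apos by (auto intro: mult_right_mono)
  ultimately obtain x where x: "-a \<le> x" "x \<le> pp" "FF x = FF a"
    using IVT2'[of FF pp "FF a" "-a", OF _ _ _ FF_cont] pa by auto
  have phx: "ph x = a" using phi_unique[of x a] x pa by auto
  have "xm = x" unfolding xminus_def
  proof (rule the_equality)
    show "x \<le> pp \<and> ph x = a" using x phx by auto
    fix z assume z: "z \<le> pp \<and> ph z = a"
    then have "FF z = FF a" using phi_props[of z] by auto
    then show "z = x" using F_inj_l[of z x] x z by auto
  qed
  moreover have "x \<noteq> pp" using x \<open>FF pp < FF a\<close> by auto
  ultimately show ?thesis using x phx by auto
qed

lemma phi_lt_a: assumes "x \<le> pp" shows "ph x < a \<longleftrightarrow> xm < x"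
proof
  assume "ph x < a" then show "xm < x"
    using phi_anti_le[of x xm] xm_props by (metis leI less_imp_le not_less)
next
  assume "xm < x" then show "ph x < a" using phi_anti[of xm x] xm_props assms by auto
qed

lemma delta_eq: assumes "x \<le> pp" shows "delta a f \<alpha> x = (f (ph x) - ph x)/(1-\<alpha>)"
proof -
  have "FF x = f (ph x) - \<alpha> * ph x" using phi_props[OF assms] by (simp add: F_al_def)
  then show ?thesis unfolding delta_def using al1 by (simp add: field_simps)
qed

lemma delta_nonneg: "x \<le> pp \<Longrightarrow> delta a f \<alpha> x \<ge> 0"
  using delta_eq G_nonneg al1 by simp

lemma delta_pos: "x \<le> pp \<Longrightarrow> xm < x \<Longrightarrow> delta a f \<alpha> x > 0"
  using delta_eq G_pos phi_lt_a al1 by simp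

lemma delta_xm: "delta a f \<alpha> xm = 0"
  using delta_eq[of xm] xm_props G_zero[of a] by simp

lemma E_strict: assumes "x1 < x2" "x2 \<le> pp" shows "EE x1 < EE x2"
proof -
  have "ph x2 \<le> ph x1" using phi_anti_le assms by auto
  then have "f (ph x1) - ph x1 \<le> f (ph x2) - ph x2" using G_mono by blast
  then have "delta a f \<alpha> x1 \<le> delta a f \<alpha> x2"
    using delta_eq[of x1] delta_eq[of x2] assms al1 by (simp add: divide_right_mono)
  then show ?thesis using assms by auto
qed

lemma E_mono: "x1 \<le> x2 \<Longrightarrow> x2 \<le> pp \<Longrightarrow> EE x1 \<le> EE x2"
  using E_strict by (cases "x1 = x2") (auto intro: less_imp_le)

lemma E_xm: "EE xm = xm" using delta_xm by simp

lemma s_al_E: "s_al a f \<alpha> = EE pp" unfolding s_al_def by simp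

lemma phi_cont: "continuous_on {xm..pp} ph"
proof -
  have c1: "continuous_on (FF ` {pp..a}) (Finv a f \<alpha>)"
    by (rule continuous_on_inv[OF FF_cont compact_Icc]) (use Finv_F in auto)
  have sub: "FF ` {xm..pp} \<subseteq> FF ` {pp..a}"
  proof
    fix y assume "y \<in> FF ` {xm..pp}"
    then obtain x where x: "x \<in> {xm..pp}" "y = FF x" by auto
    have "ph x \<le> a" using phi_anti_le[of xm x] x xm_props by auto
    then have "ph x \<in> {pp..a}" using phi_props[of x] x by auto
    moreover have "y = FF (ph x)" using phi_props[of x] x by auto
    ultimately show "y \<in> FF ` {pp..a}" by (rule rev_image_eqI)
  qed
  have "continuous_on {xm..pp} (Finv a f \<alpha> \<circ> FF)"
    by (rule continuous_on_compose[OF FF_cont continuous_on_subset[OF c1 sub]])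
  moreover have "Finv a f \<alpha> \<circ> FF = ph" by (rule ext) (simp add: phi_def)
  ultimately show ?thesis by simp
qed

lemma E_cont: "continuous_on {xm..pp} EE"
proof -
  have "continuous_on {xm..pp} (\<lambda>x. x + (FF x / (1-\<alpha>) - ph x))"
    by (intro continuous_intros FF_cont phi_cont) (use al1 in auto)
  then show ?thesis by (simp add: delta_def)
qed

lemma tau_props: assumes "xm \<le> y" "y \<le> s_al a f \<alpha>"
  shows "xm \<le> tau a f \<alpha> y \<and> tau a f \<alpha> y \<le> pp \<and> EE (tau a f \<alpha> y) = y"
proof -
  obtain x where x: "xm \<le> x" "x \<le> pp" "EE x = y"
    using IVT'[of EE xm y pp, OF _ _ _ E_cont] assms E_xm s_al_E xm_props by auto
  have "tau a f \<alpha> y = x" unfolding tau_def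
  proof (rule the_equality)
    show "x \<le> pp \<and> x + delta a f \<alpha> x = y" using x by auto
    fix z assume z: "z \<le> pp \<and> z + delta a f \<alpha> z = y"
    show "z = x"
    proof (cases z x rule: linorder_cases)
      case less then show ?thesis using E_strict[of z x] x z by auto
    next
      case greater then show ?thesis using E_strict[of x z] x z by auto
    qed
  qed
  then show ?thesis using x by auto
qed

lemma tau_mono: assumes "xm \<le> v1" "v1 \<le> v2" "v2 \<le> s_al a f \<alpha>"
  shows "tau a f \<alpha> v1 \<le> tau a f \<alpha> v2"
proof (rule ccontr)
  assume "\<not> ?thesis"
  moreover have "tau a f \<alpha> v1 \<le> pp" using tau_props[of v1] assms by auto
  ultimately have "EE (tau a f \<alpha> v2) < EE (tau a f \<alpha> v1)"
    using E_strict[of "tau a f \<alpha> v2" "tau a f \<alpha> v1"] by auto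
  then show False using tau_props[of v1] tau_props[of v2] assms by auto
qed

lemma g_strict: assumes "xm \<le> v1" "v1 < v2" "v2 \<le> s_al a f \<alpha>"
  shows "v1 - ph (tau a f \<alpha> v1) < v2 - ph (tau a f \<alpha> v2)"
proof -
  have "ph (tau a f \<alpha> v2) \<le> ph (tau a f \<alpha> v1)"
    using phi_anti_le tau_mono[of v1 v2] tau_props[of v2] assms by auto
  then show ?thesis using assms by auto
qed

lemma u_exists: "\<exists>u. xm < u \<and> u < s_al a f \<alpha> \<and> ph (tau a f \<alpha> u) = u \<and> u < a"
proof -
  have pa: "xm < pp" "pp < a" using xm_props xplus_props by auto
  have kc: "continuous_on {xm..pp} (\<lambda>y. EE y - ph y)"
    by (intro continuous_on_diff E_cont phi_cont)
  have k1: "EE xm - ph xm \<le> 0" using E_xm xm_props pa by auto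
  have k2: "0 \<le> EE pp - ph pp" using delta_pos[of pp] phi_p pa by auto
  obtain y0 where y0: "xm \<le> y0" "y0 \<le> pp" "EE y0 - ph y0 = 0"
    using IVT'[of "\<lambda>y. EE y - ph y" xm 0 pp, OF k1 k2 _ kc] pa by auto
  have ny1: "y0 \<noteq> xm" using y0 E_xm xm_props pa by auto
  have ny2: "y0 \<noteq> pp" using y0 delta_pos[of pp] phi_p pa by auto
  define u where "u = EE y0"
  have u1: "xm < u" using E_strict[of xm y0] y0 ny1 E_xm unfolding u_def by auto
  have u2: "u < s_al a f \<alpha>" using E_strict[of y0 pp] y0 ny2 s_al_E unfolding u_def by auto
  have "tau a f \<alpha> u = y0"
    unfolding tau_def u_def
  proof (rule the_equality)
    show "y0 \<le> pp \<and> y0 + delta a f \<alpha> y0 = y0 + delta a f \<alpha> y0" using y0 by auto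
    fix z assume z: "z \<le> pp \<and> z + delta a f \<alpha> z = y0 + delta a f \<alpha> y0"
    show "z = y0"
    proof (cases z y0 rule: linorder_cases)
      case less then show ?thesis using E_strict[of z y0] y0 z by auto
    next
      case greater then show ?thesis using E_strict[of y0 z] y0 z by auto
    qed
  qed
  then have u3: "ph (tau a f \<alpha> u) = u" using y0 unfolding u_def by auto
  have "ph y0 < a" using phi_lt_a[of y0] y0 ny1 by auto
  then have "u < a" using y0 unfolding u_def by auto
  then show ?thesis using u1 u2 u3 by blast
qed

lemma u_props: "xm < u_al a f \<alpha> \<and> u_al a f \<alpha> < s_al a f \<alpha> \<and>
   ph (tau a f \<alpha> (u_al a f \<alpha>)) = u_al a f \<alpha> \<and> u_al a f \<alpha> < a"
proof -
  obtain u where u: "xm < u" "u < s_al a f \<alpha>" "ph (tau a f \<alpha> u) = u" "u < a"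
    using u_exists by blast
  have "u_al a f \<alpha> = u" unfolding u_al_def
  proof (rule the_equality)
    show "xm < u \<and> u < s_al a f \<alpha> \<and> ph (tau a f \<alpha> u) = u" using u by auto
    fix v assume v: "xm < v \<and> v < s_al a f \<alpha> \<and> ph (tau a f \<alpha> v) = v"
    show "v = u"
    proof (cases v u rule: linorder_cases)
      case less then show ?thesis using g_strict[of v u] u v by auto
    next
      case greater then show ?thesis using g_strict[of u v] u v by auto
    qed
  qed
  then show ?thesis using u by auto
qed

lemma main_point: assumes x: "xm < x" "x < a"
  shows "(Sh a f \<alpha> x < f x \<longleftrightarrow> u_al a f \<alpha> < x) \<and> (Sh a f \<alpha> x = f x \<longleftrightarrow> x = u_al a f \<alpha>)"
proof (cases "x \<le> s_al a f \<alpha>")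
  case False
  then have "Sh a f \<alpha> x = x" by (simp add: Sh_def)
  moreover have "f x > x" using G_pos x by auto
  moreover have "u_al a f \<alpha> < x" using u_props False by auto
  ultimately show ?thesis by auto
next
  case True
  define y where "y = tau a f \<alpha> x"
  define u where "u = u_al a f \<alpha>"
  have y: "xm \<le> y" "y \<le> pp" "EE y = x" using tau_props[of x] x True unfolding y_def by auto
  have yx: "xm < y" using y x E_xm by (metis le_less)
  have yltx: "y < x" using delta_pos[of y] y yx by auto
  have php: "ph y \<ge> pp" "FF (ph y) = FF y" using phi_props y by auto
  have Sh: "Sh a f \<alpha> x = \<alpha> * x + FF y" using True by (simp add: Sh_def y_def)
  have fx: "f x = \<alpha> * x + FF x" by (simp add: F_al_def)
  have c1: "Sh a f \<alpha> x < f x \<longleftrightarrow> ph y < x"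
  proof (cases "x \<le> pp")
    case True
    then have "FF x < FF y" using F_dec yltx by auto
    then show ?thesis using Sh fx php True by auto
  next
    case False
    then show ?thesis using Sh fx php F_less_r_iff[of "ph y" x] by auto
  qed
  have c2: "Sh a f \<alpha> x = f x \<longleftrightarrow> ph y = x"
  proof (cases "x \<le> pp")
    case True
    then have "FF x < FF y" using F_dec yltx by auto
    then show ?thesis using Sh fx php by auto
  next
    case False
    then show ?thesis using Sh fx php F_inj_r[of "ph y" x] by auto
  qed
  have up: "xm < u" "u < s_al a f \<alpha>" "ph (tau a f \<alpha> u) = u" using u_props unfolding u_def by auto
  have "(ph y < x \<longleftrightarrow> u < x) \<and> (ph y = x \<longleftrightarrow> x = u)"
  proof (cases x u rule: linorder_cases)
    case less then show ?thesis using g_strict[of x u] up x unfolding y_def by auto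
  next
    case equal then show ?thesis using up unfolding y_def by auto
  next
    case greater then show ?thesis using g_strict[of u x] up x True unfolding y_def by auto
  qed
  then show ?thesis using c1 c2 unfolding u_def by auto
qed

end

theorem proposition3p28:
  fixes a \<alpha> :: real and f :: "real \<Rightarrow> real"
  assumes "a > 0" and "0 \<le> \<alpha>" and "\<alpha> < 1" and "class_C a f"
  shows "(\<forall>x \<in> {xminus a f \<alpha><..<a}. Sh a f \<alpha> x < f x \<longleftrightarrow> x \<in> {u_al a f \<alpha><..<a})
       \<and> u_al a f \<alpha> \<in> {xminus a f \<alpha><..<a}
       \<and> (\<forall>x \<in> {xminus a f \<alpha><..<a}. Sh a f \<alpha> x = f x \<longleftrightarrow> x = u_al a f \<alpha>)"
  using main_point[OF assms] u_props[OF assms] by auto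

end
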